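(* Let $N\ge0$ be an integer and $\epsilon$ a nonzero real number. The normalized state $$|\tilde N\rangle=\frac{1}{\sqrt{\mathcal N}}\,\frac{\sqrt{N!}}{N+1}\,\frac{e^{\epsilon^2/2}}{\epsilon^N}\sum_{k=0}^N e^{-2\pi i kN/(N+1)}\,\big|\epsilon e^{2\pi i k/(N+1)}\big\rangle,\qquad \mathcal N=N!\sum_{k=0}^\infty\frac{\epsilon^{2k(N+1)}}{(k(N+1)+N)!},$$ a superposition of $N+1$ coherent states, approximates the Fock state $|N\rangle$ with fidelity $$|\langle N|\tilde N\rangle|^2=\frac1{\mathcal N}=1-O\!\left(\frac{N!}{(2N+1)!}\epsilon^{2(N+1)}\right)\quad(\epsilon\to0).$$
   Context: Single-mode Fock basis $\{|n\rangle\}_{n\ge0}$. For $\alpha\in\mathbb C$, the coherent state is $|\alpha\rangle=e^{-|\alpha|^2/2}\sum_{n=0}^\infty\frac{\alpha^n}{\sqrt{n!}}|n\rangle$; Greek letters (and expressions such as $\epsilon e^{2\pi i k/(N+1)}$) inside kets denote coherent states, while $|N\rangle$ is the Fock state with $N$ photons. *)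

theory Defs
  imports "HOL-Analysis.Analysis" "HOL-Library.Landau_Symbols"
begin

text \<open>States of a single bosonic mode are represented by their Fock-basis amplitudes
  (nat \<Rightarrow> complex): the amplitude at n is the coefficient of the Fock state |n>.\<close>

definition coherent :: "complex \<Rightarrow> nat \<Rightarrow> complex" where
  "coherent \<alpha> n = complex_of_real (exp (- (cmod \<alpha>)\<^sup>2 / 2)) * \<alpha> ^ n
                   / complex_of_real (sqrt (fact n))"

definition normN :: "nat \<Rightarrow> real \<Rightarrow> real" where
  "normN N \<epsilon> = fact N * (\<Sum>k. \<epsilon> ^ (2 * k * (N + 1)) / fact (k * (N + 1) + N))"

definition Ntilde :: "nat \<Rightarrow> real \<Rightarrow> nat \<Rightarrow> complex" where
  "Ntilde N \<epsilon> n =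
     complex_of_real (1 / sqrt (normN N \<epsilon>) * sqrt (fact N) / real (N + 1)
                      * exp (\<epsilon>\<^sup>2 / 2) / \<epsilon> ^ N)
     * (\<Sum>k\<le>N. cis (- 2 * pi * real k * real N / real (N + 1))
                 * coherent (complex_of_real \<epsilon> * cis (2 * pi * real k / real (N + 1))) n)"

end

theory Submission
  imports Defs
begin

lemma geo:
  fixes N n :: nat
  shows "(\<Sum>k\<le>N. cis (2*pi*real k*(real n - real N)/real(N+1)))
         = (if n mod (N+1) = N then of_nat (N+1) else 0)"
proof -
  define z where "z = cis (2*pi*(real n - real N)/real(N+1))"
  have t: "cis (2*pi*real k*(real n - real N)/real(N+1)) = z^k" for k
  proof -
    have "z^k = cis (real k * (2*pi*(real n - real N)/real(N+1)))" by (simp only: z_def Complex.DeMoivre)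
    also have "real k * (2*pi*(real n - real N)/real(N+1)) = 2*pi*real k*(real n - real N)/real(N+1)"
      by (simp add: field_simps)
    finally show ?thesis by simp
  qed
  have s: "(\<Sum>k\<le>N. cis (2*pi*real k*(real n - real N)/real(N+1))) = (\<Sum>k<N+1. z^k)"
    unfolding t by (simp only: Suc_eq_plus1[symmetric] lessThan_Suc_atMost)
  have zN: "z^(N+1) = 1"
  proof -
    have "z^(N+1) = cis (2*pi*(of_int (int n - int N)))"
      unfolding z_def Complex.DeMoivre by (rule arg_cong[where f=cis]) (simp add: field_simps)
    also have "\<dots> = 1" by (rule cis_multiple_2pi) simp
    finally show ?thesis .
  qed
  show ?thesis
  proof cases
    assume h: "n mod (N+1) = N"
    have "n div (N+1) * (N+1) + N = n" using h div_mult_mod_eq[of n "N+1"] by simp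
    then have "real n - real N = real (n div (N+1)) * real (N+1)"
      by (metis add_diff_cancel_right' of_nat_add of_nat_mult)
    then have "z = cis (2*pi*real (n div (N+1)))" unfolding z_def by (intro arg_cong[where f=cis]) (simp add: field_simps)
    also have "\<dots> = 1" by (rule cis_multiple_2pi) simp
    finally have "z = 1" .
    then show ?thesis using s h by simp
  next
    assume h: "n mod (N+1) \<noteq> N"
    have "z \<noteq> 1"
    proof
      assume "z = 1"
      then have "exp (\<i> * complex_of_real (2*pi*(real n - real N)/real(N+1))) = 1"
        unfolding z_def cis_conv_exp .
      then obtain m :: int where m: "2*pi*(real n - real N)/real(N+1) = of_int (2*m) * pi"
        unfolding exp_eq_1 by auto
      then have "2*pi*((real n - real N)/real(N+1)) = 2*pi*real_of_int m"
        by (simp add: mult_ac)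
      then have "(real n - real N)/real(N+1) = real_of_int m"
        using pi_gt_zero by (metis mult_cancel_left mult_eq_0_iff pi_neq_zero zero_neq_numeral)
      then have "real n - real N = of_int m * real (N+1)"
        by (simp add: field_simps)
      then have "int n = int N + m * int (N+1)"
        by (metis (mono_tags, opaque_lifting) add_diff_cancel_left' add_diff_cancel_right' diff_add_cancel of_int_eq_iff of_int_mult of_int_of_nat_eq of_int_add of_int_diff)
      then have "int n mod int (N+1) = int N" by simp
      then have "int (n mod (N+1)) = int N" by (simp add: zmod_int)
      then show False using h by simp
    qed
    then have "(\<Sum>k<N+1. z^k) = 0" using zN by (simp only: sum_gp_strict) simp
    then show ?thesis using s h by simp
  qed
qed

lemma even_nonneg: "0 \<le> (x::real)^(2*m)"
  unfolding power_mult by simp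

lemma summ: "summable (\<lambda>k. \<epsilon> ^ (2 * k * (N + 1)) / fact (k * (N + 1) + N) :: real)"
proof (rule summable_comparison_test'[where g="\<lambda>k. inverse (fact k) * (\<epsilon>^(2*(N+1)))^k" and N=0])
  show "summable (\<lambda>k. inverse (fact k) * (\<epsilon>^(2*(N+1)))^k)" by (rule summable_exp)
  fix k :: nat
  have "2*k*(N+1) = 2*(N+1)*k" by simp
  then have e: "\<epsilon>^(2*k*(N+1)) = (\<epsilon>^(2*(N+1)))^k" by (simp only: power_mult)
  have nn0: "0 \<le> \<epsilon>^(2*(N+1))" by (rule even_nonneg)
  then have nn: "0 \<le> (\<epsilon>^(2*(N+1)))^k" by simp
  have "fact k \<le> (fact (k*(N+1)+N) :: real)" by (rule fact_mono) simp
  then have "(\<epsilon>^(2*(N+1)))^k / fact (k*(N+1)+N) \<le> (\<epsilon>^(2*(N+1)))^k / fact k"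
    using nn by (intro divide_left_mono) auto
  then show "norm (\<epsilon> ^ (2 * k * (N + 1)) / fact (k * (N + 1) + N) :: real) \<le> inverse (fact k) * (\<epsilon>^(2*(N+1)))^k"
    using e nn by (simp add: field_simps)
qed

lemma normN_pos: "normN N \<epsilon> > 0"
proof -
  have "0 < (\<Sum>k. \<epsilon> ^ (2 * k * (N + 1)) / fact (k * (N + 1) + N) :: real)"
    by (rule suminf_pos2[OF summ, of _ _ 0]) (auto intro!: divide_nonneg_pos zero_le_even_power)
  then show ?thesis unfolding normN_def by simp
qed

lemma alg: "(d::real) \<noteq> 0 \<Longrightarrow> c \<noteq> 0 \<Longrightarrow> s \<noteq> 0 \<Longrightarrow> q \<noteq> 0 \<Longrightarrow>
   (1/s*f/d*x/c) * (y*p/q) * d = f/s*p/c/q*(x*y)"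
  by (simp add: field_simps)

lemma term_eq:
  "cis (- 2 * pi * real k * real N / real (N + 1))
     * coherent (complex_of_real \<epsilon> * cis (2 * pi * real k / real (N + 1))) n
   = complex_of_real (exp (- \<epsilon>\<^sup>2 / 2) * \<epsilon> ^ n / sqrt (fact n))
     * cis (2*pi*real k*(real n - real N)/real(N+1))"
proof -
  have a: "cis (- 2 * pi * real k * real N / real (N + 1)) * cis (real n * (2 * pi * real k / real (N + 1)))
     = cis (2*pi*real k*(real n - real N)/real(N+1))"
  proof -
    have d: "real (N+1) > 0" by simp
    have "- 2 * pi * real k * real N / real (N + 1) + real n * (2 * pi * real k / real (N + 1))
       = 2*pi*real k*(real n - real N)/real(N+1)"
      using d by (simp add: divide_simps, simp add: algebra_simps)
    then show ?thesis unfolding cis_mult by simp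
  qed
  have b: "(complex_of_real \<epsilon> * cis (2 * pi * real k / real (N + 1))) ^ n
      = complex_of_real (\<epsilon> ^ n) * cis (real n * (2 * pi * real k / real (N + 1)))"
    by (simp only: power_mult_distrib Complex.DeMoivre of_real_power)
  have c: "cmod (complex_of_real \<epsilon> * cis (2 * pi * real k / real (N + 1))) = \<bar>\<epsilon>\<bar>"
    by (simp add: norm_mult)
  show ?thesis
    unfolding coherent_def b c a[symmetric]
    by (simp add: field_simps)
qed

lemma Ntilde_eq:
  assumes "\<epsilon> \<noteq> 0"
  shows "Ntilde N \<epsilon> n = (if n mod (N+1) = N then complex_of_real
     (sqrt (fact N) / sqrt (normN N \<epsilon>) * \<epsilon> ^ n / \<epsilon> ^ N / sqrt (fact n)) else 0)"
proof -
  define C where "C = complex_of_real (1 / sqrt (normN N \<epsilon>) * sqrt (fact N) / real (N + 1)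
                      * exp (\<epsilon>\<^sup>2 / 2) / \<epsilon> ^ N)"
  define D where "D = complex_of_real (exp (- \<epsilon>\<^sup>2 / 2) * \<epsilon> ^ n / sqrt (fact n))"
  have "Ntilde N \<epsilon> n = C * (\<Sum>k\<le>N. D * cis (2*pi*real k*(real n - real N)/real(N+1)))"
    unfolding Ntilde_def C_def D_def term_eq ..
  also have "\<dots> = C * D * (\<Sum>k\<le>N. cis (2*pi*real k*(real n - real N)/real(N+1)))"
    by (simp add: sum_distrib_left mult.assoc)
  also have "\<dots> = C * D * (if n mod (N+1) = N then of_nat (N+1) else 0)"
    by (simp only: geo)
  finally have *: "Ntilde N \<epsilon> n = C * D * (if n mod (N+1) = N then of_nat (N+1) else 0)" .
  have e: "exp (\<epsilon>\<^sup>2 / 2) * exp (- \<epsilon>\<^sup>2 / 2) = 1" by (simp add: exp_add[symmetric])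
  have "C * D * of_nat (N+1) = complex_of_real
     (sqrt (fact N) / sqrt (normN N \<epsilon>) * \<epsilon> ^ n / \<epsilon> ^ N / sqrt (fact n))"
  proof -
    have "C * D * of_nat (N+1) = complex_of_real ((1 / sqrt (normN N \<epsilon>) * sqrt (fact N) / real (N + 1)
                      * exp (\<epsilon>\<^sup>2 / 2) / \<epsilon> ^ N) * (exp (- \<epsilon>\<^sup>2 / 2) * \<epsilon> ^ n / sqrt (fact n)) * real (N+1))"
      unfolding C_def D_def by (simp only: of_real_mult of_real_of_nat_eq)
    also have "(1 / sqrt (normN N \<epsilon>) * sqrt (fact N) / real (N + 1)
                      * exp (\<epsilon>\<^sup>2 / 2) / \<epsilon> ^ N) * (exp (- \<epsilon>\<^sup>2 / 2) * \<epsilon> ^ n / sqrt (fact n)) * real (N+1)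
        = sqrt (fact N) / sqrt (normN N \<epsilon>) * \<epsilon> ^ n / \<epsilon> ^ N / sqrt (fact n) * (exp (\<epsilon>\<^sup>2 / 2) * exp (- \<epsilon>\<^sup>2 / 2))"
      using normN_pos[of N \<epsilon>] assms by (intro alg) auto
    finally show ?thesis by (simp only: e mult_1_right)
  qed
  then show ?thesis using * by simp
qed


lemma norm_sq:
  assumes "\<epsilon> \<noteq> 0"
  shows "(cmod (Ntilde N \<epsilon> (k*(N+1)+N)))\<^sup>2
     = fact N / normN N \<epsilon> * (\<epsilon> ^ (2 * k * (N + 1)) / fact (k * (N + 1) + N))"
proof -
  have "(k*(N+1)+N) mod (N+1) = N mod (N+1)" by (simp only: add.commute[of "k*(N+1)"] mod_mult_self1)
  then have m: "(k*(N+1)+N) mod (N+1) = N" by simp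
  have p: "\<epsilon> ^ (k*(N+1)+N) / \<epsilon> ^ N = \<epsilon> ^ (k*(N+1))"
    using assms by (simp add: power_add)
  have q: "(\<epsilon> ^ (k*(N+1)))\<^sup>2 = \<epsilon> ^ (2 * k * (N + 1))"
    by (simp add: power_mult[symmetric] mult_ac)
  have "(cmod (Ntilde N \<epsilon> (k*(N+1)+N)))\<^sup>2
      = (sqrt (fact N) / sqrt (normN N \<epsilon>) * \<epsilon> ^ (k*(N+1)+N) / \<epsilon> ^ N / sqrt (fact (k*(N+1)+N)))\<^sup>2"
    unfolding Ntilde_eq[OF assms] by (simp only: m simp_thms if_True norm_of_real power2_abs)
  also have "\<dots> = (sqrt (fact N) / sqrt (normN N \<epsilon>) * (\<epsilon> ^ (k*(N+1)) / sqrt (fact (k*(N+1)+N))))\<^sup>2"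
    by (simp only: times_divide_eq_right[symmetric] p)
  also have "\<dots> = fact N / normN N \<epsilon> * (\<epsilon> ^ (2 * k * (N + 1)) / fact (k * (N + 1) + N))"
    using normN_pos[of N \<epsilon>] by (simp only: power_mult_distrib power_divide q real_sqrt_pow2 fact_ge_zero less_imp_le)
  finally show ?thesis .
qed

lemma alg2: "(F::real) > 0 \<Longrightarrow> E * F * (n / F * p) = n * E * p"
  by (simp add: field_simps)

theorem corollary1:
  fixes N :: nat
  shows "(\<forall>\<epsilon>::real. \<epsilon> \<noteq> 0 \<longrightarrow>
            ((\<lambda>n. (cmod (Ntilde N \<epsilon> n))\<^sup>2) sums 1) \<and>
            (cmod (Ntilde N \<epsilon> N))\<^sup>2 = 1 / normN N \<epsilon>)
         \<and> (\<lambda>\<epsilon>. 1 - 1 / normN N \<epsilon>)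
             \<in> O[at 0](\<lambda>\<epsilon>. fact N / fact (2 * N + 1) * \<epsilon> ^ (2 * (N + 1)))"
proof (intro conjI allI impI)
  fix \<epsilon> :: real
  assume e: "\<epsilon> \<noteq> 0"
  define a where "a = (\<lambda>k. \<epsilon> ^ (2 * k * (N + 1)) / fact (k * (N + 1) + N) :: real)"
  define g where "g = (\<lambda>k::nat. k*(N+1)+N)"
  have S: "normN N \<epsilon> = fact N * suminf a" unfolding normN_def a_def ..
  have sm: "(\<lambda>k. fact N / normN N \<epsilon> * a k) sums (fact N / normN N \<epsilon> * suminf a)"
    by (rule sums_mult, rule summable_sums) (unfold a_def, rule summ)
  have one: "fact N / normN N \<epsilon> * suminf a = 1"
  proof -
    have "suminf a \<noteq> 0" using normN_pos[of N \<epsilon>] S by auto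
    then show ?thesis using S by simp
  qed
  have "(\<lambda>k. fact N / normN N \<epsilon> * a k) sums 1" using sm unfolding one .
  moreover have "(\<lambda>k. (cmod (Ntilde N \<epsilon> (g k)))\<^sup>2) = (\<lambda>k. fact N / normN N \<epsilon> * a k)"
    unfolding g_def a_def norm_sq[OF e] ..
  ultimately have "(\<lambda>k. (cmod (Ntilde N \<epsilon> (g k)))\<^sup>2) sums 1" by simp
  moreover have "strict_mono g" unfolding g_def by (rule strict_monoI) (auto intro: add_less_le_mono)
  moreover have "(cmod (Ntilde N \<epsilon> n))\<^sup>2 = 0" if "n \<notin> range g" for n
  proof -
    have "n mod (N+1) \<noteq> N"
    proof
      assume h: "n mod (N+1) = N"
      have "n = g (n div (N+1))" unfolding g_def using h div_mult_mod_eq[of n "N+1"] by simp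
      then show False using that by auto
    qed
    then show ?thesis unfolding Ntilde_eq[OF e] by simp
  qed
  ultimately show "(\<lambda>n. (cmod (Ntilde N \<epsilon> n))\<^sup>2) sums 1"
    using sums_mono_reindex[of g "\<lambda>n. (cmod (Ntilde N \<epsilon> n))\<^sup>2" 1] by simp
  show "(cmod (Ntilde N \<epsilon> N))\<^sup>2 = 1 / normN N \<epsilon>"
    using norm_sq[OF e, of N 0] by simp
next
  define E where "E = (\<Sum>k. inverse (fact k) :: real)"
  have sE: "summable (\<lambda>k. inverse (fact k) :: real)"
    using summable_exp[of "1::real"] by simp
  have bound: "\<bar>1 - 1 / normN N \<epsilon>\<bar> \<le> fact N * E * \<epsilon> ^ (2 * (N + 1))"
    if "\<bar>\<epsilon>\<bar> < 1" for \<epsilon> :: real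
  proof -
    define a where "a = (\<lambda>k. \<epsilon> ^ (2 * k * (N + 1)) / fact (k * (N + 1) + N) :: real)"
    define y where "y = \<epsilon> ^ (2 * (N + 1))"
    have sa: "summable a" unfolding a_def by (rule summ)
    have y0: "0 \<le> y" unfolding y_def by (rule zero_le_even_power) simp
    have y1: "y \<le> 1"
    proof -
      have "y = \<bar>\<epsilon>\<bar> ^ (2*(N+1))" unfolding y_def by (rule power_even_abs[symmetric]) simp
      also have "\<dots> \<le> 1" using that by (intro power_le_one) auto
      finally show ?thesis .
    qed
    have a0: "a 0 = 1 / fact N" unfolding a_def by simp
    have tail: "(\<Sum>k. a (Suc k)) = suminf a - 1 / fact N"
      using suminf_split_head[OF sa] a0 by simp
    have le: "a (Suc k) \<le> y * inverse (fact k)" for k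
    proof -
      have "2 * Suc k * (N + 1) = 2 * (N+1) * Suc k" by simp
      then have ay: "\<epsilon> ^ (2 * Suc k * (N + 1)) = y ^ Suc k" unfolding y_def by (simp only: power_mult)
      have "y ^ Suc k = y * y ^ k" by simp
      also have "\<dots> \<le> y" using y0 y1 by (simp add: mult_left_le power_le_one)
      finally have "y ^ Suc k \<le> y" .
      have f: "fact k \<le> (fact (Suc k * (N + 1) + N) :: real)" by (rule fact_mono) simp
      have "a (Suc k) = y ^ Suc k / fact (Suc k * (N + 1) + N)" unfolding a_def ay ..
      also have "\<dots> \<le> y ^ Suc k / fact k"
        by (intro divide_left_mono f zero_le_power y0 mult_pos_pos fact_gt_zero)
      also have "\<dots> \<le> y / fact k"
        using \<open>y ^ Suc k \<le> y\<close> by (simp add: divide_right_mono)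
      finally show ?thesis by (simp only: divide_inverse)
    qed
    have "(\<Sum>k. a (Suc k)) \<le> (\<Sum>k. y * inverse (fact k))"
      using le by (intro suminf_le) (simp_all only: summable_Suc_iff[of a] sa summable_mult sE)
    also have "\<dots> = y * E" unfolding E_def using sE by (rule suminf_mult)
    finally have t: "(\<Sum>k. a (Suc k)) \<le> y * E" .
    have t0: "0 \<le> (\<Sum>k. a (Suc k))"
    proof (rule suminf_nonneg)
      show "summable (\<lambda>k. a (Suc k))" by (simp only: summable_Suc_iff[of a] sa)
      fix k show "0 \<le> a (Suc k)" unfolding a_def by (intro divide_nonneg_pos zero_le_even_power fact_gt_zero) simp
    qed
    have nN: "normN N \<epsilon> = fact N * suminf a" unfolding normN_def a_def ..
    have nN2: "normN N \<epsilon> = fact N * (\<Sum>k. a (Suc k)) + 1"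
      unfolding nN tail by (simp add: right_diff_distrib)
    have n1: "normN N \<epsilon> \<ge> 1" unfolding nN2 using t0 by simp
    have n2: "normN N \<epsilon> - 1 \<le> fact N * (y * E)" unfolding nN2 using t
      by (simp add: mult_left_mono)
    have "\<bar>1 - 1 / normN N \<epsilon>\<bar> = 1 - 1 / normN N \<epsilon>" using n1 by simp
    also have "\<dots> = (normN N \<epsilon> - 1) / normN N \<epsilon>" using n1 by (simp add: diff_divide_distrib)
    also have "\<dots> \<le> (normN N \<epsilon> - 1) / 1" using n1 by (intro divide_left_mono) auto
    also have "\<dots> = normN N \<epsilon> - 1" by simp
    also have "\<dots> \<le> fact N * E * \<epsilon> ^ (2 * (N + 1))" using n2 unfolding y_def by (simp only: mult_ac)
    finally show ?thesis .
  qed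
  show "(\<lambda>\<epsilon>. 1 - 1 / normN N \<epsilon>)
             \<in> O[at 0](\<lambda>\<epsilon>. fact N / fact (2 * N + 1) * \<epsilon> ^ (2 * (N + 1)))"
  proof (rule bigoI[where c="E * fact (2*N+1)"])
    show "\<forall>\<^sub>F x in at 0. norm (1 - 1 / normN N x) \<le> E * fact (2*N+1) * norm (fact N / fact (2 * N + 1) * x ^ (2 * (N + 1)) :: real)"
      unfolding eventually_at
    proof (intro exI[of _ 1] conjI ballI impI)
      fix x :: real assume "x \<in> UNIV" "x \<noteq> 0 \<and> dist x 0 < 1"
      then have "\<bar>x\<bar> < 1" by simp
      have x0: "0 \<le> x ^ (2 * (N + 1))" by (rule zero_le_even_power) simp
      have eqn: "E * fact (2*N+1) * norm (fact N / fact (2 * N + 1) * x ^ (2 * (N + 1)) :: real)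
          = fact N * E * x ^ (2 * (N + 1))"
      proof -
        have "norm (fact N / fact (2 * N + 1) * x ^ (2 * (N + 1)) :: real) = fact N / fact (2 * N + 1) * x ^ (2 * (N + 1))"
          unfolding real_norm_def by (rule abs_of_nonneg) (intro mult_nonneg_nonneg divide_nonneg_nonneg fact_ge_zero x0)
        then show ?thesis using alg2[OF fact_gt_zero[of "2*N+1"]] by simp
      qed
      show "norm (1 - 1 / normN N x) \<le> E * fact (2*N+1) * norm (fact N / fact (2 * N + 1) * x ^ (2 * (N + 1)) :: real)"
        using bound[OF \<open>\<bar>x\<bar> < 1\<close>] eqn unfolding real_norm_def by linarith
    qed simp
  qed
qed

end
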